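(* Let $n\ge 2$ and $\rho>0$, and let each channel gain $|h_i|^2$, $i=1,\dots,n$, be exponentially distributed with mean $1$ (Rayleigh fading). Then the best-case zero-outage capacity $\overline{R^{0}}(\rho)=\log_2(1+\rho\,\phi(0))$ satisfies $$\overline{R^{0}}(\rho)\le\log_2\bigl(1+\rho\, n\log(n)\bigr).$$
   Context: Here $G(x)=-\log(1-x)$ is the quantile of the $\mathrm{Exp}(1)$ distribution (natural logarithm). Define $H_0(x)=(n-1)G((n-1)x)+G(1-x)=-(n-1)\log(1-(n-1)x)-\log(x)$, $c_n(0)=\min\{c\in[0,\tfrac1n]: \int_c^{1/n}H_0(t)\,dt\ge(\tfrac1n-c)H_0(c)\}$, and $\phi(0)=H_0(c_n(0))$ if $c_n(0)>0$, $\phi(0)=n$ if $c_n(0)=0$. The quantity $\log_2(1+\rho\phi(0))$ is the best-case (over joint distributions with these marginals) zero-outage capacity without CSI at the transmitter. *)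

theory Defs
  imports "HOL-Analysis.Analysis"
begin

text \<open>Quantile function of the Exp(1) distribution (Rayleigh fading: |h_i|^2 ~ Exp(1)).\<close>
definition G :: "real \<Rightarrow> real" where
  "G x = - ln (1 - x)"

definition H0 :: "nat \<Rightarrow> real \<Rightarrow> real" where
  "H0 n x = real (n - 1) * G (real (n - 1) * x) + G (1 - x)"

text \<open>The admissible set of the minimisation defining c_n(0).  At c = 0 one has
  H_0(0) = +infinity, so the defining inequality fails there; hence only c > 0 is admitted.\<close>
definition cn_set :: "nat \<Rightarrow> real set" where
  "cn_set n = {c. 0 < c \<and> c \<le> 1 / real n \<and>
                  integral {c..1 / real n} (H0 n) \<ge> (1 / real n - c) * H0 n c}"

definition cn0 :: "nat \<Rightarrow> real" where
  "cn0 n = Inf (cn_set n)"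

definition phi0 :: "nat \<Rightarrow> real" where
  "phi0 n = (if cn0 n > 0 then H0 n (cn0 n) else real n)"

end

theory Submission
  imports Defs
begin

lemma H0_eq: "H0 n x = - real (n-1) * ln (1 - real (n-1) * x) - ln x"
  by (simp add: H0_def G_def)

lemma H0_convex:
  fixes n :: nat and c b x :: real
  defines "m \<equiv> real (n-1)"
  assumes c: "0 < c" and cb: "c < b" and bm: "m * b < 1" and x: "c \<le> x" "x \<le> b"
  shows "H0 n x \<le> H0 n c + (x - c) * ((H0 n b - H0 n c) / (b - c))"
proof -
  define t where "t = (x - c) / (b - c)"
  have t0: "0 \<le> t" and t1: "t \<le> 1" using x cb by (auto simp: t_def field_simps)
  have "t * (b - c) = x - c" using cb by (simp add: t_def)
  then have xt: "x = (1 - t) * c + t * b" by (simp add: algebra_simps)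
  have m0: "m \<ge> 0" by (simp add: m_def)
  have mc: "m * c < 1" using bm m0 cb c by (smt (verit) mult_left_mono)
  have l1: "ln x \<ge> (1 - t) * ln c + t * ln b"
    using concave_onD[OF ln_concave t0 t1, of c b] c cb xt by simp
  have yt: "1 - m * x = (1 - t) * (1 - m * c) + t * (1 - m * b)"
    by (subst xt) (simp add: algebra_simps)
  have l2: "ln (1 - m * x) \<ge> (1 - t) * ln (1 - m * c) + t * ln (1 - m * b)"
    using concave_onD[OF ln_concave t0 t1, of "1 - m*c" "1 - m*b"] mc bm yt by simp
  have "H0 n x \<le> (1 - t) * H0 n c + t * H0 n b"
    unfolding H0_eq m_def[symmetric]
  proof -
    have "m * ln (1 - m * x) \<ge> m * ((1 - t) * ln (1 - m * c) + t * ln (1 - m * b))"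
      using l2 m0 by (rule mult_left_mono)
    then show "- m * ln (1 - m * x) - ln x
      \<le> (1 - t) * (- m * ln (1 - m * c) - ln c) + t * (- m * ln (1 - m * b) - ln b)"
      using l1 by (simp add: algebra_simps)
  qed
  also have "\<dots> = H0 n c + (x - c) * ((H0 n b - H0 n c) / (b - c))"
  proof -
    have "(x - c) * ((H0 n b - H0 n c) / (b - c)) = t * (H0 n b - H0 n c)"
      by (simp add: t_def)
    then show ?thesis by (simp add: algebra_simps)
  qed
  finally show ?thesis .
qed

lemma H0_cont:
  fixes n :: nat and x :: real
  assumes "0 < x" "real (n-1) * x < 1"
  shows "isCont (H0 n) x"
proof -
  have "isCont (\<lambda>x. - real (n-1) * ln (1 - real (n-1) * x) - ln x) x"
    using assms by (intro continuous_intros) auto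
  then show ?thesis unfolding H0_eq[abs_def] .
qed

lemma key:
  fixes n :: nat and c :: real
  assumes n: "n \<ge> 2" and cS: "c \<in> cn_set n"
  shows "H0 n c \<le> H0 n (1 / real n)"
proof -
  define b where "b = 1 / real n"
  define m where "m = real (n-1)"
  have c0: "0 < c" and cb: "c \<le> b" and I: "integral {c..b} (H0 n) \<ge> (b - c) * H0 n c"
    using cS by (auto simp: cn_set_def b_def)
  have mb: "m * b < 1" using n by (simp add: m_def b_def of_nat_diff field_simps)
  show ?thesis
  proof (cases "c = b")
    case True then show ?thesis by (simp add: b_def)
  next
    case False
    with cb have cb': "c < b" by simp
    define s where "s = (H0 n b - H0 n c) / (b - c)"
    have cont: "continuous_on {c..b} (H0 n)"
    proof (intro continuous_at_imp_continuous_on ballI)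
      fix x assume x: "x \<in> {c..b}"
      have "m * x \<le> m * b" using x by (intro mult_left_mono) (auto simp: m_def)
      then show "isCont (H0 n) x" using x c0 mb by (intro H0_cont) (auto simp: m_def)
    qed
    have int1: "H0 n integrable_on {c..b}"
      using cont by (rule integrable_continuous_real)
    have hi: "((\<lambda>x. H0 n c + (x - c) * s) has_integral
        ((H0 n c * b + (b - c)^2 / 2 * s) - (H0 n c * c + (c - c)^2 / 2 * s))) {c..b}"
      using cb by (intro fundamental_theorem_of_calculus)
        (auto intro!: derivative_eq_intros simp: has_real_derivative_iff_has_vector_derivative[symmetric] algebra_simps, simp add: field_simps)
    have "integral {c..b} (H0 n) \<le> integral {c..b} (\<lambda>x. H0 n c + (x - c) * s)"
      using int1 hi H0_convex[OF c0 cb' mb[unfolded m_def]]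
      by (intro integral_le) (auto simp: s_def)
    also have "\<dots> = (H0 n c * b + (b - c)^2 / 2 * s) - (H0 n c * c + (c - c)^2 / 2 * s)"
      using hi by (rule integral_unique)
    also have "\<dots> = (b - c) * (H0 n c + H0 n b) / 2"
      using cb' by (simp add: s_def power2_eq_square field_simps)
    finally have "(b - c) * H0 n c \<le> (b - c) * (H0 n c + H0 n b) / 2" using I by linarith
    then have "(b - c) * H0 n c \<le> (b - c) * H0 n b" by (simp add: algebra_simps)
    then show ?thesis using cb' by (simp add: b_def)
  qed
qed

lemma H0_at: "n \<ge> 2 \<Longrightarrow> H0 n (1 / real n) = real n * ln (real n)"
proof -
  assume n: "n \<ge> 2"
  have "1 - real (n-1) * (1 / real n) = 1 / real n" using n by (simp add: of_nat_diff field_simps)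
  then have "H0 n (1 / real n) = - real (n-1) * ln (1 / real n) - ln (1 / real n)"
    by (simp add: H0_eq)
  also have "\<dots> = real n * ln (real n)" using n by (simp add: ln_div of_nat_diff algebra_simps)
  finally show ?thesis .
qed

lemma H0_ge: "0 < x \<Longrightarrow> real (n-1) * x < 1 \<Longrightarrow> - ln x \<le> H0 n x"
proof -
  assume a: "0 < x" "real (n-1) * x < 1"
  have "ln (1 - real (n-1) * x) \<le> 0" using a by simp
  then have "real (n-1) * ln (1 - real (n-1) * x) \<le> 0" by (simp add: mult_nonneg_nonpos)
  then show ?thesis by (simp add: H0_eq)
qed

theorem corollary2:
  fixes n :: nat and \<rho> :: real
  assumes "n \<ge> 2" and "\<rho> > 0"
  shows "log 2 (1 + \<rho> * phi0 n) \<le> log 2 (1 + \<rho> * (real n * ln (real n)))"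
proof -
  define L where "L = real n * ln (real n)"
  define b where "b = 1 / real n"
  define m where "m = real (n-1)"
  have n: "n \<ge> 2" by fact
  have mb: "m * b < 1" using n by (simp add: m_def b_def of_nat_diff field_simps)
  have m0: "m \<ge> 0" by (simp add: m_def)
  have bS: "b \<in> cn_set n" using n by (simp add: cn_set_def b_def)
  have ne: "cn_set n \<noteq> {}" using bS by auto
  have bdd: "bdd_below (cn_set n)" by (rule bdd_belowI[of _ 0]) (auto simp: cn_set_def)
  have keyL: "H0 n c \<le> L" if "c \<in> cn_set n" for c
    using key[OF n that] H0_at[OF n] by (simp add: L_def)
  have lowb: "exp (- L) \<le> c" if cS: "c \<in> cn_set n" for c
  proof -
    have c0: "0 < c" and cb: "c \<le> b" using cS by (auto simp: cn_set_def b_def)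
    have "m * c \<le> m * b" using cb m0 by (rule mult_left_mono)
    then have "- ln c \<le> L" using H0_ge[of c n] keyL[OF cS] c0 mb by (simp add: m_def)
    then have "exp (- L) \<le> exp (ln c)" by simp
    then show ?thesis using c0 by simp
  qed
  have cpos: "cn0 n \<ge> exp (- L)"
    unfolding cn0_def using ne lowb by (rule cInf_greatest)
  then have cpos': "cn0 n > 0" by (smt (verit) exp_gt_zero)
  have cle: "cn0 n \<le> b" unfolding cn0_def using bS bdd by (rule cInf_lower)
  have mcn: "m * cn0 n < 1"
    using mult_left_mono[OF cle m0] mb by linarith
  have phi: "phi0 n = H0 n (cn0 n)" using cpos' by (simp add: phi0_def)
  have main: "H0 n (cn0 n) \<le> L"
  proof (rule ccontr)
    assume "\<not> ?thesis"
    then have gt: "H0 n (cn0 n) > L" by simp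
    have "isCont (H0 n) (cn0 n)" using cpos' mcn by (intro H0_cont) (auto simp: m_def)
    then have "\<forall>\<^sub>F x in at (cn0 n). H0 n x > L"
      using gt by (simp add: isCont_def order_tendsto_iff)
    then obtain d where d: "d > 0" and hd: "\<And>x. x \<noteq> cn0 n \<Longrightarrow> dist x (cn0 n) < d \<Longrightarrow> H0 n x > L"
      unfolding eventually_at by blast
    have "Inf (cn_set n) < cn0 n + d" using d by (simp add: cn0_def)
    then obtain c where cS: "c \<in> cn_set n" and cl: "c < cn0 n + d"
      using cInf_less_iff[OF ne bdd] by blast
    have cg: "cn0 n \<le> c" unfolding cn0_def using cS bdd by (rule cInf_lower)
    have "H0 n c > L"
    proof (cases "c = cn0 n")
      case True then show ?thesis using gt by simp
    next
      case False then show ?thesis using hd[of c] cg cl by (simp add: dist_real_def)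
    qed
    then show False using keyL[OF cS] by simp
  qed
  have H0pos: "H0 n (cn0 n) > 0"
  proof -
    have "b < 1" using n by (simp add: b_def)
    then have "cn0 n < 1" using cle by simp
    then have "- ln (cn0 n) > 0" using cpos' by simp
    moreover have "- ln (cn0 n) \<le> H0 n (cn0 n)" using H0_ge[of "cn0 n" n] cpos' mcn by (simp add: m_def)
    ultimately show ?thesis by linarith
  qed
  have "1 + \<rho> * phi0 n \<le> 1 + \<rho> * L"
    using main assms(2) phi by (simp add: mult_left_mono)
  moreover have "0 < 1 + \<rho> * phi0 n" using H0pos phi assms(2) by (simp add: add_pos_pos)
  ultimately show ?thesis by (simp add: L_def)
qed

end
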